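(* Let $n\ge m\ge 0$ be integers with $n\equiv m \pmod 2$. Then $$\int_{-\infty}^{\infty} f_n(x) f_m(x)\,dx = \binom{n+m}{\frac{n+m}{2}}.$$
   Context: For $A\subseteq\mathbb{R}$, $\chi_A$ denotes the characteristic function of $A$. Define functions $f_n:\mathbb{R}\to\mathbb{R}$, $n = 0,1,2,\dots$, recursively by $f_0 = \chi_{(-1/2,1/2)}$ and $f_{n+1}(x) = f_n(x+1/2) + f_n(x-1/2)$ for all $x\in\mathbb{R}$. *)

theory Defs
  imports "HOL-Analysis.Analysis"
begin

fun f :: "nat \<Rightarrow> real \<Rightarrow> real" where
  "f 0 x = indicator {-1/2<..<1/2} x"
| "f (Suc n) x = f n (x + 1/2) + f n (x - 1/2)"

end

theory Submission
  imports Defs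
begin

lemma UNIV_not_cbox_real: "\<not> (\<exists>a b. (UNIV::real set) = cbox a b)"
  using bounded_cbox not_bounded_UNIV by metis

lemma has_integral_UNIV_shift:
  fixes g :: "real \<Rightarrow> real"
  assumes "(g has_integral y) UNIV"
  shows "((\<lambda>x. g (x + c)) has_integral y) UNIV"
proof -
  have A: "\<forall>e>0. \<exists>B>0. \<forall>a b. ball 0 B \<subseteq> cbox a b \<longrightarrow>
      (\<exists>z. ((\<lambda>x. if x \<in> UNIV then g x else 0) has_integral z) (cbox a b) \<and> norm (z - y) < e)"
    using assms UNIV_not_cbox_real by (subst (asm) has_integral_alt) simp
  have "\<forall>e>0. \<exists>B>0. \<forall>a b. ball 0 B \<subseteq> cbox a b \<longrightarrow>
      (\<exists>z. ((\<lambda>x. if x \<in> UNIV then g (x + c) else 0) has_integral z) (cbox a b) \<and> norm (z - y) < e)"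
  proof (intro allI impI)
    fix e :: real assume e: "e > 0"
    then obtain B where B: "B > 0" and HB: "\<And>a b. ball 0 B \<subseteq> cbox a b \<Longrightarrow>
      (\<exists>z. ((\<lambda>x. if x \<in> UNIV then g x else 0) has_integral z) (cbox a b) \<and> norm (z - y) < e)"
      using A by blast
    show "\<exists>B>0. \<forall>a b. ball 0 B \<subseteq> cbox a b \<longrightarrow>
      (\<exists>z. ((\<lambda>x. if x \<in> UNIV then g (x + c) else 0) has_integral z) (cbox a b) \<and> norm (z - y) < e)"
    proof -
      have key: "\<exists>z. ((\<lambda>x. if x \<in> UNIV then g (x + c) else 0) has_integral z) (cbox a b) \<and> norm (z - y) < e"
        if ab: "ball 0 (B + \<bar>c\<bar>) \<subseteq> cbox a b" for a b :: real
      proof -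
        have bb: "ball 0 B \<subseteq> cbox (a + c) (b + c)"
        proof
          fix x :: real assume "x \<in> ball 0 B"
          hence "x - c \<in> ball 0 (B + \<bar>c\<bar>)" by (auto simp: dist_real_def)
          hence "x - c \<in> cbox a b" using ab by blast
          thus "x \<in> cbox (a + c) (b + c)" by auto
        qed
        then obtain z where z: "(g has_integral z) {a + c..b + c}" "norm (z - y) < e"
          using HB[OF bb] by auto
        have "((\<lambda>x. g (x + c)) has_integral z) {a..b}"
          using has_integral_shift_real_ivl[OF z(1), of c] by simp
        thus ?thesis using z(2) by auto
      qed
      have "B + \<bar>c\<bar> > 0" using B by simp
      thus ?thesis using key by blast
    qed
  qed
  thus ?thesis using UNIV_not_cbox_real has_integral_alt[of "\<lambda>x. g (x + c)" y UNIV] by simp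
qed

definition B :: "nat \<Rightarrow> int \<Rightarrow> real" where
  "B N k = (if 0 \<le> k \<and> k \<le> int N then real (N choose nat k) else 0)"

lemma B_Suc: "B (Suc N) k = B N k + B N (k - 1)"
proof -
  consider "k < 0" | "k = 0" | "0 < k \<and> k \<le> int N" | "k = int N + 1" | "k > int N + 1" by linarith
  thus ?thesis
  proof cases
    case 3
    define j where "j = nat (k - 1)"
    have j: "k = int (Suc j)" "j < N" using 3 unfolding j_def by auto
    have e: "nat k = Suc j" "nat (k - 1) = j" "0 \<le> k" "k \<le> int (Suc N)" "k \<le> int N" "0 \<le> k-1" "k - 1 \<le> int N" "0 < k" "k \<le> 1 + int N" "\<not> N < j"
      using j by auto
    show ?thesis by (simp add: B_def e)
  next
    case 4
    hence "nat k = Suc N" "nat (k - 1) = N" by auto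
    with 4 show ?thesis by (simp add: B_def)
  qed (auto simp: B_def)
qed

lemma base00:
  fixes c :: int
  assumes "even c"
  shows "((\<lambda>x. f 0 (x + of_int c / 2) * f 0 x) has_integral B 0 (c div 2)) UNIV"
proof (cases "c = 0")
  case True
  have "((\<lambda>x::real. 1::real) has_integral 1) {-1/2<..<1/2::real}"
    using has_integral_Icc_iff_Ioo[of "\<lambda>x::real. 1::real" 1 "-1/2" "1/2"]
      has_integral_const_real[of "1::real" "-1/2" "1/2"] by simp
  hence "((\<lambda>x. if x \<in> {-1/2<..<1/2::real} then 1 else 0) has_integral (1::real)) UNIV"
    by (subst has_integral_restrict_UNIV)
  moreover have "(\<lambda>x. f 0 (x + of_int c / 2) * f 0 x) = (\<lambda>x. if x \<in> {-1/2<..<1/2::real} then 1 else 0)"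
    using True by (auto simp: indicator_def fun_eq_iff)
  ultimately show ?thesis using True by (simp add: B_def)
next
  case False
  have "\<bar>c\<bar> \<ge> 2" using assms False by presburger
  hence z: "f 0 (x + of_int c / 2) * f 0 x = 0" for x
  proof -
    have "\<bar>real_of_int c\<bar> \<ge> 2" using \<open>\<bar>c\<bar> \<ge> 2\<close> by linarith
    thus ?thesis by (auto simp: indicator_def)
  qed
  have "B 0 (c div 2) = 0" using False assms by (auto simp: B_def)
  moreover have "(\<lambda>x. f 0 (x + of_int c / 2) * f 0 x) = (\<lambda>x. 0)" using z by (rule ext)
  ultimately show ?thesis by simp
qed

lemma base0:
  "\<forall>c::int. even (int m + c) \<longrightarrow>
    ((\<lambda>x. f 0 (x + of_int c / 2) * f m x) has_integral B m ((int m + c) div 2)) UNIV"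
proof (induction m)
  case 0
  then show ?case using base00 by simp
next
  case (Suc m)
  show ?case
  proof (intro allI impI)
    fix c :: int assume ev: "even (int (Suc m) + c)"
    have e1: "even (int m + (c - 1))" and e2: "even (int m + (c + 1))" using ev by auto
    have I1: "((\<lambda>x. f 0 (x + of_int (c-1) / 2) * f m x) has_integral B m ((int m + (c-1)) div 2)) UNIV"
      using Suc e1 by blast
    have I2: "((\<lambda>x. f 0 (x + of_int (c+1) / 2) * f m x) has_integral B m ((int m + (c+1)) div 2)) UNIV"
      using Suc e2 by blast
    have J1: "((\<lambda>x. f 0 (x + of_int c / 2) * f m (x + 1/2)) has_integral B m ((int m + (c-1)) div 2)) UNIV"
    proof -
      have eq1: "\<And>x::real. x + 1/2 + of_int (c-1)/2 = x + of_int c/2" by (simp add: field_simps)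
      show ?thesis using has_integral_UNIV_shift[OF I1, of "1/2"] by (simp only: eq1)
    qed
    have J2: "((\<lambda>x. f 0 (x + of_int c / 2) * f m (x - 1/2)) has_integral B m ((int m + (c+1)) div 2)) UNIV"
    proof -
      have eq1: "\<And>x::real. x - 1/2 + of_int (c+1)/2 = x + of_int c/2" by (simp add: field_simps)
      have eq2: "\<And>x::real. x + -1/2 = x - 1/2" by simp
      show ?thesis using has_integral_UNIV_shift[OF I2, of "-1/2"] by (simp only: eq1 eq2)
    qed
    obtain k where k: "int (Suc m) + c = 2 * k" using ev by (metis evenE)
    have "(int m + (c-1)) div 2 = k - 1" "(int m + (c+1)) div 2 = k" "(int (Suc m) + c) div 2 = k"
      using k by auto
    hence "B (Suc m) ((int (Suc m) + c) div 2) = B m ((int m + (c-1)) div 2) + B m ((int m + (c+1)) div 2)"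
      by (simp add: B_Suc)
    moreover have "(\<lambda>x. f 0 (x + of_int c / 2) * f (Suc m) x) =
       (\<lambda>x. f 0 (x + of_int c / 2) * f m (x + 1/2) + f 0 (x + of_int c / 2) * f m (x - 1/2))"
      by (simp add: distrib_left)
    ultimately show "((\<lambda>x. f 0 (x + of_int c / 2) * f (Suc m) x) has_integral B (Suc m) ((int (Suc m) + c) div 2)) UNIV"
      using has_integral_add[OF J1 J2] by simp
  qed
qed

lemma main:
  "\<forall>c::int. even (int n + int m + c) \<longrightarrow>
    ((\<lambda>x. f n (x + of_int c / 2) * f m x) has_integral B (n + m) ((int (n + m) + c) div 2)) UNIV"
proof (induction n)
  case 0
  then show ?case using base0 by simp
next
  case (Suc n)
  show ?case
  proof (intro allI impI)
    fix c :: int assume ev: "even (int (Suc n) + int m + c)"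
    have e1: "even (int n + int m + (c - 1))" and e2: "even (int n + int m + (c + 1))" using ev by auto
    have I1: "((\<lambda>x. f n (x + of_int (c-1) / 2) * f m x) has_integral B (n+m) ((int (n+m) + (c-1)) div 2)) UNIV"
      using Suc e1 by blast
    have I2: "((\<lambda>x. f n (x + of_int (c+1) / 2) * f m x) has_integral B (n+m) ((int (n+m) + (c+1)) div 2)) UNIV"
      using Suc e2 by blast
    obtain k where k: "int (Suc n) + int m + c = 2 * k" using ev by (metis evenE)
    have "(int (n+m) + (c-1)) div 2 = k - 1" "(int (n+m) + (c+1)) div 2 = k" "(int (Suc n + m) + c) div 2 = k"
      using k by auto
    hence "B (Suc n + m) ((int (Suc n + m) + c) div 2) = B (n+m) ((int (n+m) + (c+1)) div 2) + B (n+m) ((int (n+m) + (c-1)) div 2)"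
      by (simp add: B_Suc)
    moreover have "(\<lambda>x. f (Suc n) (x + of_int c / 2) * f m x) =
       (\<lambda>x. f n (x + of_int (c+1) / 2) * f m x + f n (x + of_int (c-1) / 2) * f m x)"
    proof -
      have eq1: "\<And>x::real. x + of_int c / 2 + 1/2 = x + of_int (c+1)/2" by (simp add: field_simps)
      have eq2: "\<And>x::real. x + of_int c / 2 - 1/2 = x + of_int (c-1)/2" by (simp add: field_simps)
      show ?thesis by (simp only: f.simps eq1 eq2 distrib_right)
    qed
    ultimately show "((\<lambda>x. f (Suc n) (x + of_int c / 2) * f m x) has_integral B (Suc n + m) ((int (Suc n + m) + c) div 2)) UNIV"
      using has_integral_add[OF I2 I1] by simp
  qed
qed

theorem mainTheorem5:
  fixes n m :: nat
  assumes "m \<le> n" and "n mod 2 = m mod 2"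
  shows "((\<lambda>x. f n x * f m x) has_integral real ((n + m) choose ((n + m) div 2))) UNIV"
proof -
  have "even (int n + int m + 0)" using assms(2) by presburger
  hence H: "((\<lambda>x. f n (x + of_int 0 / 2) * f m x) has_integral B (n + m) ((int (n + m) + 0) div 2)) UNIV"
    using main by blast
  have "B (n + m) ((int (n + m) + 0) div 2) = real ((n + m) choose ((n + m) div 2))"
  proof -
    have "(int (n + m) + 0) div 2 = int ((n + m) div 2)" by (simp add: zdiv_int)
    thus ?thesis by (simp add: B_def)
  qed
  thus ?thesis using H by simp
qed

end
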